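(* Let $G=(V,E)$ be a finite directed graph and let $R(G)$ denote its root. Then $R(G)$ is the smallest subset $S\subseteq V$ (with respect to inclusion) satisfying both of the following conditions: (i) for every $v\in V$ there exist $w\in S$ and a walk from $w$ to $v$ in $G$; (ii) if $v\in S$, $w\in V$ and $(w,v)\in E$, then $w\in S$.
   Context: A directed graph (digraph) is a pair $G=(V,E)$ with $V$ a finite set and $E\subseteq V\times V$; loops $(v,v)$ are allowed. A walk from $v_0$ to $v_n$ is a sequence $(v_0,\dots,v_n)$ of vertices, $n\ge 0$, with $(v_{i-1},v_i)\in E$ for all $i\in\{1,\dots,n\}$; write $v\leadsto w$ if there is a walk from $v$ to $w$. Define $v\sim w$ iff $v\leadsto w$ and $w\leadsto v$ (strongly connected components). The quotient graph $G^{SCC}=(V/_\sim,E^{SCC})$ has edges $(P,Q)$ for $P\ne Q$ such that $(p,q)\in E$ for some $p\in P$, $q\in Q$. The source of a digraph $H=(W,F)$ is $\mathrm{source}(H)=\{v\in W: \text{no edge of }F\text{ ends in }v\}$. The root of $G$ is $R(G):=\bigcup \mathrm{source}(G^{SCC})\subseteq V$, i.e. the union of those strongly connected components that have no incoming edge from another component. *)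

theory Defs
  imports Main
begin

text \<open>A digraph is a pair (V, E) with V a finite set and E a subset of V x V.\<close>

definition is_walk :: "'a set \<Rightarrow> ('a \<times> 'a) set \<Rightarrow> 'a list \<Rightarrow> bool" where
  "is_walk V E xs \<longleftrightarrow> xs \<noteq> [] \<and> set xs \<subseteq> V \<and>
     (\<forall>i. Suc i < length xs \<longrightarrow> (xs ! i, xs ! Suc i) \<in> E)"

definition reach :: "'a set \<Rightarrow> ('a \<times> 'a) set \<Rightarrow> 'a \<Rightarrow> 'a \<Rightarrow> bool" where
  "reach V E v w \<longleftrightarrow> (\<exists>xs. is_walk V E xs \<and> hd xs = v \<and> last xs = w)"

definition scc_rel :: "'a set \<Rightarrow> ('a \<times> 'a) set \<Rightarrow> ('a \<times> 'a) set" where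
  "scc_rel V E = {(v, w). v \<in> V \<and> w \<in> V \<and> reach V E v w \<and> reach V E w v}"

definition scc_vertices :: "'a set \<Rightarrow> ('a \<times> 'a) set \<Rightarrow> 'a set set" where
  "scc_vertices V E = V // scc_rel V E"

definition scc_edges :: "'a set \<Rightarrow> ('a \<times> 'a) set \<Rightarrow> ('a set \<times> 'a set) set" where
  "scc_edges V E = {(P, Q). P \<in> scc_vertices V E \<and> Q \<in> scc_vertices V E \<and> P \<noteq> Q \<and>
      (\<exists>p\<in>P. \<exists>q\<in>Q. (p, q) \<in> E)}"

definition source :: "'b set \<Rightarrow> ('b \<times> 'b) set \<Rightarrow> 'b set" where
  "source W F = {v \<in> W. \<not> (\<exists>u. (u, v) \<in> F)}"

definition root :: "'a set \<Rightarrow> ('a \<times> 'a) set \<Rightarrow> 'a set" where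
  "root V E = \<Union> (source (scc_vertices V E) (scc_edges V E))"

end

theory Submission
  imports Defs
begin

lemma walk_single: "is_walk V E [x] \<longleftrightarrow> x \<in> V"
  by (auto simp: is_walk_def)

lemma walk_cons: "is_walk V E (x#y#ys) \<longleftrightarrow> x \<in> V \<and> (x,y) \<in> E \<and> is_walk V E (y#ys)"
proof
  assume h: "is_walk V E (x#y#ys)"
  have "(x,y) \<in> E" using h unfolding is_walk_def by (metis length_Cons nth_Cons_0 nth_Cons_Suc zero_less_Suc Suc_less_eq)
  moreover have "\<forall>i. Suc i < length (y#ys) \<longrightarrow> ((y#ys) ! i, (y#ys) ! Suc i) \<in> E"
  proof (intro allI impI)
    fix i assume "Suc i < length (y#ys)"
    then have "Suc (Suc i) < length (x#y#ys)" by simp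
    with h have "((x#y#ys) ! Suc i, (x#y#ys) ! Suc (Suc i)) \<in> E" unfolding is_walk_def by blast
    then show "((y#ys) ! i, (y#ys) ! Suc i) \<in> E" by simp
  qed
  ultimately show "x \<in> V \<and> (x,y) \<in> E \<and> is_walk V E (y#ys)" using h unfolding is_walk_def by auto
next
  assume h: "x \<in> V \<and> (x,y) \<in> E \<and> is_walk V E (y#ys)"
  show "is_walk V E (x#y#ys)" unfolding is_walk_def
  proof (intro conjI allI impI)
    show "x#y#ys \<noteq> []" by simp
    show "set (x#y#ys) \<subseteq> V" using h unfolding is_walk_def by auto
    fix i assume i: "Suc i < length (x#y#ys)"
    show "((x#y#ys) ! i, (x#y#ys) ! Suc i) \<in> E"
    proof (cases i)
      case 0 then show ?thesis using h by simp
    next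
      case (Suc j)
      then have "Suc j < length (y#ys)" using i by simp
      then have "((y#ys) ! j, (y#ys) ! Suc j) \<in> E" using h unfolding is_walk_def by blast
      then show ?thesis using Suc by simp
    qed
  qed
qed

lemma walk_rtrancl: "is_walk V E xs \<Longrightarrow> (hd xs, last xs) \<in> E\<^sup>*"
proof (induction xs)
  case Nil then show ?case by (simp add: is_walk_def)
next
  case (Cons x xs)
  show ?case
  proof (cases xs)
    case Nil then show ?thesis by simp
  next
    case (Cons y ys)
    have "(x,y) \<in> E" "is_walk V E xs" using Cons.prems \<open>xs = y#ys\<close> by (simp_all add: walk_cons)
    with Cons.IH Cons show ?thesis by (auto intro: converse_rtrancl_into_rtrancl)
  qed
qed

lemma reach_iff:
  assumes "E \<subseteq> V \<times> V"
  shows "reach V E v w \<longleftrightarrow> v \<in> V \<and> (v,w) \<in> E\<^sup>*"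
proof
  assume "reach V E v w"
  then obtain xs where "is_walk V E xs" "hd xs = v" "last xs = w" unfolding reach_def by auto
  then show "v \<in> V \<and> (v,w) \<in> E\<^sup>*" using walk_rtrancl[of V E xs]
    by (auto simp: is_walk_def)
next
  assume h: "v \<in> V \<and> (v,w) \<in> E\<^sup>*"
  have "(v,w) \<in> E\<^sup>* \<Longrightarrow> v \<in> V \<Longrightarrow> \<exists>xs. is_walk V E xs \<and> hd xs = v \<and> last xs = w"
  proof (induction rule: converse_rtrancl_induct)
    case base then show ?case by (intro exI[of _ "[w]"]) (simp add: walk_single)
  next
    case (step a a')
    then have "a' \<in> V" using assms by auto
    with step obtain xs where xs: "is_walk V E xs" "hd xs = a'" "last xs = w" by auto
    then obtain ys where "xs = a' # ys" by (cases xs) (auto simp: is_walk_def)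
    then show ?case using xs step walk_cons[of V E a a' ys]
      by (intro exI[of _ "a#xs"]) auto
  qed
  then show "reach V E v w" using h unfolding reach_def by auto
qed

definition good where "good V E x \<longleftrightarrow> x \<in> V \<and> (\<forall>u. (u,x) \<in> E\<^sup>* \<longrightarrow> (x,u) \<in> E\<^sup>*)"

lemma scc_rel_eq:
  assumes "E \<subseteq> V \<times> V"
  shows "scc_rel V E = {(v,w). v \<in> V \<and> w \<in> V \<and> (v,w) \<in> E\<^sup>* \<and> (w,v) \<in> E\<^sup>*}"
  using reach_iff[OF assms] unfolding scc_rel_def by auto

lemma bad_edge:
  assumes "(u,x) \<in> E\<^sup>*"
  shows "(x,u) \<in> E\<^sup>* \<or> (\<exists>a b. (a,b) \<in> E \<and> (x,a) \<notin> E\<^sup>* \<and> (b,x) \<in> E\<^sup>* \<and> (x,b) \<in> E\<^sup>*)"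
  using assms
proof (induction rule: converse_rtrancl_induct)
  case base then show ?case by simp
next
  case (step u u')
  show ?case
  proof (cases "(x,u') \<in> E\<^sup>*")
    case True
    show ?thesis
    proof (cases "(x,u) \<in> E\<^sup>*")
      case False then show ?thesis using True step by blast
    qed simp
  next
    case False then show ?thesis using step by blast
  qed
qed

lemma class_eq:
  assumes "(a,b) \<in> E\<^sup>*" "(b,a) \<in> E\<^sup>*" "a \<in> V" "b \<in> V"
  shows "{(v,w). v \<in> V \<and> w \<in> V \<and> (v,w) \<in> E\<^sup>* \<and> (w,v) \<in> E\<^sup>*} `` {a}
       = {(v,w). v \<in> V \<and> w \<in> V \<and> (v,w) \<in> E\<^sup>* \<and> (w,v) \<in> E\<^sup>*} `` {b}"
proof -
  have "(y,b) \<in> E\<^sup>*" "(b,y) \<in> E\<^sup>*" if "(y,a) \<in> E\<^sup>*" "(a,y) \<in> E\<^sup>*" for y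
    using that assms by (meson rtrancl_trans)+
  moreover have "(y,a) \<in> E\<^sup>*" "(a,y) \<in> E\<^sup>*" if "(y,b) \<in> E\<^sup>*" "(b,y) \<in> E\<^sup>*" for y
    using that assms by (meson rtrancl_trans)+
  ultimately show ?thesis using assms(3,4) by auto
qed

lemma root_eq:
  assumes E: "E \<subseteq> V \<times> V"
  shows "root V E = {x. good V E x}"
proof
  let ?R = "scc_rel V E"
  note R = scc_rel_eq[OF E]
  show "root V E \<subseteq> {x. good V E x}"
  proof
    fix x assume "x \<in> root V E"
    then obtain P where P: "P \<in> V // ?R" "x \<in> P" "\<not> (\<exists>u. (u,P) \<in> scc_edges V E)"
      unfolding root_def source_def scc_vertices_def by auto
    then obtain x0 where x0: "x0 \<in> V" "P = ?R `` {x0}" by (auto elim: quotientE)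
    have xV: "x \<in> V" using P x0 R by auto
    have xx0: "(x0,x) \<in> E\<^sup>*" "(x,x0) \<in> E\<^sup>*" using x0 P(2) R by auto
    have Px: "P = ?R `` {x}" using class_eq[OF xx0 x0(1) xV] x0(2) unfolding R by simp
    have "(x,u) \<in> E\<^sup>*" if ux: "(u,x) \<in> E\<^sup>*" for u
    proof (rule ccontr)
      assume nu: "(x,u) \<notin> E\<^sup>*"
      then obtain a b where ab: "(a,b) \<in> E" "(x,a) \<notin> E\<^sup>*" "(b,x) \<in> E\<^sup>*" "(x,b) \<in> E\<^sup>*"
        using bad_edge[OF ux] by blast
      have aV: "a \<in> V" "b \<in> V" using ab E by auto
      let ?Q = "?R `` {a}"
      have Q: "?Q \<in> V // ?R" using aV by (auto intro: quotientI)
      have "a \<in> ?Q" using aV R by auto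
      moreover have "a \<notin> P" using Px R ab by auto
      moreover have "b \<in> P" using Px R ab aV xV by auto
      ultimately have "(?Q, P) \<in> scc_edges V E" using Q P(1) ab
        unfolding scc_edges_def scc_vertices_def by blast
      then show False using P(3) by blast
    qed
    then show "x \<in> {x. good V E x}" using xV by (auto simp: good_def)
  qed
  show "{x. good V E x} \<subseteq> root V E"
  proof
    fix x assume "x \<in> {x. good V E x}"
    then have g: "x \<in> V" "\<And>u. (u,x) \<in> E\<^sup>* \<Longrightarrow> (x,u) \<in> E\<^sup>*" by (auto simp: good_def)
    let ?P = "?R `` {x}"
    have P: "?P \<in> V // ?R" using g by (auto intro: quotientI)
    have xP: "x \<in> ?P" using g R by auto
    have "\<not> (\<exists>u. (u,?P) \<in> scc_edges V E)"
    proof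
      assume "\<exists>u. (u,?P) \<in> scc_edges V E"
      then obtain Q q p where Q: "Q \<in> V // ?R" "Q \<noteq> ?P" "q \<in> Q" "p \<in> ?P" "(q,p) \<in> E"
        unfolding scc_edges_def scc_vertices_def by auto
      obtain q0 where q0: "q0 \<in> V" "Q = ?R `` {q0}" using Q(1) by (auto elim: quotientE)
      have "(p,x) \<in> E\<^sup>*" using Q(4) R by auto
      then have "(q,x) \<in> E\<^sup>*" using Q(5) by (meson converse_rtrancl_into_rtrancl)
      then have "(x,q) \<in> E\<^sup>*" using g by blast
      have qq0: "(q0,q) \<in> E\<^sup>*" "(q,q0) \<in> E\<^sup>*" using q0 Q(3) R by auto
      have qV: "q \<in> V" using q0 Q(3) R by auto
      have "Q = ?R `` {q}" using class_eq[OF qq0 q0(1) qV] q0(2) unfolding R by simp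
      also have "\<dots> = ?P" using class_eq[OF \<open>(q,x) \<in> E\<^sup>*\<close> \<open>(x,q) \<in> E\<^sup>*\<close> qV g(1)] unfolding R by simp
      finally have "Q = ?P" .
      then show False using Q(2) by blast
    qed
    then show "x \<in> root V E" using P xP unfolding root_def source_def scc_vertices_def by blast
  qed
qed

theorem theorem2p4:
  fixes V :: "'a set" and E :: "('a \<times> 'a) set"
  assumes "finite V" and "E \<subseteq> V \<times> V"
  shows "root V E \<subseteq> V
    \<and> (\<forall>v\<in>V. \<exists>w\<in>root V E. reach V E w v)
    \<and> (\<forall>v w. v \<in> root V E \<and> w \<in> V \<and> (w, v) \<in> E \<longrightarrow> w \<in> root V E)
    \<and> (\<forall>S. S \<subseteq> V \<and> (\<forall>v\<in>V. \<exists>w\<in>S. reach V E w v)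
          \<and> (\<forall>v w. v \<in> S \<and> w \<in> V \<and> (w, v) \<in> E \<longrightarrow> w \<in> S)
          \<longrightarrow> root V E \<subseteq> S)"
proof -
  note RE = root_eq[OF assms(2)] and RI = reach_iff[OF assms(2)]
  have pre: "u \<in> V" if "(u,v) \<in> E\<^sup>*" "v \<in> V" for u v
    using that assms(2) by (induction rule: converse_rtrancl_induct) auto
  have A: "root V E \<subseteq> V" unfolding RE good_def by blast
  have B: "\<exists>w\<in>root V E. reach V E w v" if v: "v \<in> V" for v
  proof -
    define anc where "anc u = {y. (y,u) \<in> E\<^sup>*}" for u
    have fin: "finite (anc u)" if uV: "u \<in> V" for u
    proof -
      have "anc u \<subseteq> V" unfolding anc_def using pre uV by blast
      then show ?thesis using assms(1) by (rule finite_subset)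
    qed
    obtain w where w: "(w,v) \<in> E\<^sup>*" "\<And>y. (y,v) \<in> E\<^sup>* \<Longrightarrow> card (anc w) \<le> card (anc y)"
      using ex_has_least_nat[of "\<lambda>u. (u,v) \<in> E\<^sup>*" v "\<lambda>u. card (anc u)"] by blast
    have wV: "w \<in> V" using pre w(1) v by blast
    have "\<forall>u. (u,w) \<in> E\<^sup>* \<longrightarrow> (w,u) \<in> E\<^sup>*"
    proof (intro allI impI, rule ccontr)
      fix u assume u: "(u,w) \<in> E\<^sup>*" "(w,u) \<notin> E\<^sup>*"
      have uv: "(u,v) \<in> E\<^sup>*" using u(1) w(1) by (rule rtrancl_trans)
      have sub: "anc u \<subseteq> anc w"
      proof
        fix y assume "y \<in> anc u"
        then have "(y,u) \<in> E\<^sup>*" by (simp add: anc_def)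
        then have "(y,w) \<in> E\<^sup>*" using u(1) by (rule rtrancl_trans)
        then show "y \<in> anc w" by (simp add: anc_def)
      qed
      have "w \<in> anc w" "w \<notin> anc u" using u(2) by (simp_all add: anc_def)
      then have "anc u \<subset> anc w" using sub by blast
      then have "card (anc u) < card (anc w)" using fin[OF wV] by (rule psubset_card_mono[rotated])
      with w(2)[OF uv] show False by simp
    qed
    then have "good V E w" using wV unfolding good_def by blast
    then have "w \<in> root V E" using RE by blast
    moreover have "reach V E w v" using RI w(1) wV by blast
    ultimately show ?thesis by blast
  qed
  have C: "w \<in> root V E" if h: "v \<in> root V E" "w \<in> V" "(w,v) \<in> E" for v w
  proof -
    have gv: "good V E v" using h(1) RE by blast
    have wv: "(w,v) \<in> E\<^sup>*" using h(3) by blast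
    have vw: "(v,w) \<in> E\<^sup>*" using gv wv unfolding good_def by blast
    have "(w,u) \<in> E\<^sup>*" if uw: "(u,w) \<in> E\<^sup>*" for u
    proof -
      have "(u,v) \<in> E\<^sup>*" using uw wv by (rule rtrancl_trans)
      then have "(v,u) \<in> E\<^sup>*" using gv unfolding good_def by blast
      then show ?thesis using wv by (rule rtrancl_trans[rotated])
    qed
    then have "good V E w" using h(2) unfolding good_def by blast
    then show ?thesis using RE by blast
  qed
  have D: "root V E \<subseteq> S" if S: "S \<subseteq> V" "\<forall>v\<in>V. \<exists>w\<in>S. reach V E w v"
      "\<forall>v w. v \<in> S \<and> w \<in> V \<and> (w, v) \<in> E \<longrightarrow> w \<in> S" for S
  proof
    fix x assume "x \<in> root V E"
    then have g: "good V E x" using RE by blast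
    then have xV: "x \<in> V" unfolding good_def by blast
    then obtain w where w: "w \<in> S" "reach V E w x" using S(2) by blast
    then have wx: "(w,x) \<in> E\<^sup>*" using RI by blast
    then have xw: "(x,w) \<in> E\<^sup>*" using g unfolding good_def by blast
    have cl: "b \<in> S \<Longrightarrow> a \<in> S" if "(a,b) \<in> E\<^sup>*" for a b
      using that
    proof (induction rule: converse_rtrancl_induct)
      case base then show ?case .
    next
      case (step y z)
      then have "z \<in> S" by blast
      moreover have "y \<in> V" using step(1) assms(2) by blast
      ultimately show ?case using S(3) step(1) by blast
    qed
    show "x \<in> S" using cl[OF xw w(1)] .
  qed
  show ?thesis
  proof (intro conjI)
    show "root V E \<subseteq> V" by (rule A)
    show "\<forall>v\<in>V. \<exists>w\<in>root V E. reach V E w v" using B by blast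
    show "\<forall>v w. v \<in> root V E \<and> w \<in> V \<and> (w, v) \<in> E \<longrightarrow> w \<in> root V E" using C by blast
    show "\<forall>S. S \<subseteq> V \<and> (\<forall>v\<in>V. \<exists>w\<in>S. reach V E w v)
          \<and> (\<forall>v w. v \<in> S \<and> w \<in> V \<and> (w, v) \<in> E \<longrightarrow> w \<in> S)
          \<longrightarrow> root V E \<subseteq> S" using D by blast
  qed
qed

end
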